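(* The set of Lebesgue integrable functions on $[0,1]$ which are not equivalent (i.e. not equal almost everywhere) to a Riemann integrable function on any nondegenerate subinterval of $[0,1]$ is spaceable in $L^1([0,1])$.
   Context: A subset $S$ of a topological vector space $X$ is spaceable if $S\cup\{0\}$ contains a closed infinite-dimensional vector subspace of $X$. *)

theory Defs
  imports "HOL-Analysis.Analysis"
begin

(* Riemann integrability of f on [a,b]: Riemann sums over tagged divisions of
   mesh controlled by a constant gauge converge to some value I. *)
definition riemann_integrable_on :: "(real \<Rightarrow> real) \<Rightarrow> real \<Rightarrow> real \<Rightarrow> bool" where
  "riemann_integrable_on f a b \<longleftrightarrow>
     (\<exists>I. \<forall>e>0. \<exists>\<delta>>0. \<forall>D. D tagged_division_of {a..b} \<and> (\<lambda>x. ball x \<delta>) fine D \<longrightarrow>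
        \<bar>(\<Sum>(x,K)\<in>D. Henstock_Kurzweil_Integration.content K * f x) - I\<bar> < e)"

definition ae_eq_on :: "real set \<Rightarrow> (real \<Rightarrow> real) \<Rightarrow> (real \<Rightarrow> real) \<Rightarrow> bool" where
  "ae_eq_on A f g \<longleftrightarrow> (AE x in lborel. x \<in> A \<longrightarrow> f x = g x)"

(* representatives of elements of L^1([0,1]) *)
definition L1_01 :: "(real \<Rightarrow> real) set" where
  "L1_01 = {f. set_integrable lborel {0..1} f}"

definition L1_dist :: "(real \<Rightarrow> real) \<Rightarrow> (real \<Rightarrow> real) \<Rightarrow> real" where
  "L1_dist f g = (LINT x:{0..1}|lborel. \<bar>f x - g x\<bar>)"

(* A set V of representatives that is saturated under a.e.-equality on [0,1]
   corresponds exactly to a subset of L^1([0,1]).  V is a closed infinite-dimensional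
   vector subspace of L^1([0,1]). *)
definition closed_inf_dim_subspace_L1 :: "(real \<Rightarrow> real) set \<Rightarrow> bool" where
  "closed_inf_dim_subspace_L1 V \<longleftrightarrow>
     V \<subseteq> L1_01 \<and>
     (\<forall>f\<in>V. \<forall>g\<in>L1_01. ae_eq_on {0..1} f g \<longrightarrow> g \<in> V) \<and>
     (\<lambda>x. 0) \<in> V \<and>
     (\<forall>f\<in>V. \<forall>g\<in>V. (\<lambda>x. f x + g x) \<in> V) \<and>
     (\<forall>c::real. \<forall>f\<in>V. (\<lambda>x. c * f x) \<in> V) \<and>
     (\<forall>F g. (\<forall>n. F n \<in> V) \<and> g \<in> L1_01 \<and> (\<lambda>n. L1_dist (F n) g) \<longlonglongrightarrow> 0 \<longrightarrow> g \<in> V) \<and>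
     (\<exists>E::nat \<Rightarrow> real \<Rightarrow> real. (\<forall>i. E i \<in> V) \<and>
        (\<forall>n c. ae_eq_on {0..1} (\<lambda>x. \<Sum>i<n. c i * E i x) (\<lambda>x. 0) \<longrightarrow> (\<forall>i<n. c i = 0)))"

(* S \<subseteq> L^1([0,1]) (given by a.e.-invariant representatives) is spaceable:
   S \<union> {0} contains a closed infinite-dimensional subspace. *)
definition spaceable_L1 :: "(real \<Rightarrow> real) set \<Rightarrow> bool" where
  "spaceable_L1 S \<longleftrightarrow>
     (\<exists>V. closed_inf_dim_subspace_L1 V \<and>
          (\<forall>f\<in>V. \<not> ae_eq_on {0..1} f (\<lambda>x. 0) \<longrightarrow> f \<in> S))"

definition nowhere_Riemann_L1 :: "(real \<Rightarrow> real) set" where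
  "nowhere_Riemann_L1 = {f \<in> L1_01. \<forall>a b. 0 \<le> a \<and> a < b \<and> b \<le> 1 \<longrightarrow>
      \<not> (\<exists>g. riemann_integrable_on g a b \<and> ae_eq_on {a..b} f g)}"

end

theory Submission
  imports Defs
begin


definition Rg :: "real \<Rightarrow> int \<Rightarrow> int \<Rightarrow> real \<Rightarrow> real set" where
  "Rg N p q s = {x. of_int p / N \<le> x \<and> x < of_int q / N \<and> frac (N*x) < s}"

lemma Rg_piece:
  assumes N: "N > 0" and s: "0 \<le> s" "s \<le> 1"
  shows "Rg N q (q+1) s = {of_int q / N ..< (of_int q + s) / N}"
proof -
  have "x \<in> Rg N q (q+1) s \<longleftrightarrow> x \<in> {of_int q / N ..< (of_int q + s) / N}" for x
  proof -
    have "of_int q / N \<le> x \<and> x < of_int (q+1) / N \<longleftrightarrow> of_int q \<le> N*x \<and> N*x < of_int q + 1"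
      using N by (auto simp: field_simps)
    moreover have "of_int q \<le> N*x \<and> N*x < of_int q + 1 \<Longrightarrow> frac (N*x) = N*x - of_int q"
      by (simp add: frac_def floor_unique)
    ultimately show ?thesis using N s unfolding Rg_def
      by (auto simp: field_simps)
  qed
  then show ?thesis by blast
qed

lemma Rg_sets[measurable]: "Rg N p q s \<in> sets lborel"
  unfolding Rg_def frac_def by measurable

lemma Rg_emeasure:
  assumes N: "N > 0" and s: "0 \<le> s" "s \<le> 1" and pq: "p \<le> q"
  shows "emeasure lborel (Rg N p q s) = ennreal (of_int (q - p) * s / N)"
  using pq
proof (induction q rule: int_ge_induct)
  case base
  have "Rg N p p s = {}" unfolding Rg_def by auto
  then show ?case by simp
next
  case (step q)
  have eq: "Rg N p (q+1) s = Rg N p q s \<union> Rg N q (q+1) s"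
    using step.hyps N unfolding Rg_def by (auto simp: field_simps)
  have dj: "Rg N p q s \<inter> Rg N q (q+1) s = {}"
    unfolding Rg_def by auto
  have e1: "emeasure lborel (Rg N p (q+1) s) = emeasure lborel (Rg N p q s) + emeasure lborel (Rg N q (q+1) s)"
    unfolding eq by (rule plus_emeasure[symmetric]) (use dj Rg_sets in auto)
  have e2: "emeasure lborel (Rg N q (q+1) s) = ennreal (s / N)"
    unfolding Rg_piece[OF N s] using N s by (simp add: emeasure_lborel_Ico field_simps diff_divide_distrib)
  have e3: "ennreal (of_int (q - p) * s / N) + ennreal (s / N) = ennreal (of_int (q + 1 - p) * s / N)"
    using step.hyps N s by (subst ennreal_plus[symmetric]) (auto simp: field_simps mult_left_mono)
  show ?case using e1 e2 e3 step.IH by simp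
qed

definition sg :: "nat \<Rightarrow> real" where "sg n = (1/3)^n"
definition Sset :: "nat \<Rightarrow> real set" where "Sset n = {x. frac (2^n * x) < sg n}"
definition Tset :: "nat \<Rightarrow> real set" where "Tset n = Sset n - (\<Union>m. Sset (m + Suc n))"
definition Dyad :: "nat \<Rightarrow> nat \<Rightarrow> real set" where
  "Dyad L j = {real j / 2^L ..< (real j + 1) / 2^L}"

lemma sg_pos: "0 < sg n" and sg_le1: "sg n \<le> 1"
  unfolding sg_def by (auto simp: power_le_one)

lemma Sset_sets[measurable]: "Sset n \<in> sets lborel"
  unfolding Sset_def frac_def by measurable

lemma Tset_sets[measurable]: "Tset n \<in> sets lborel"
  unfolding Tset_def by measurable

lemma Dyad_sets[measurable]: "Dyad L j \<in> sets lborel"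
  unfolding Dyad_def by simp

lemma Sset_Dyad:
  assumes "L \<le> n"
  shows "emeasure lborel (Sset n \<inter> Dyad L j) = ennreal (sg n / 2^L)"
proof -
  define k :: nat where "k = n - L"
  have n: "n = L + k" using assms k_def by simp
  have "Sset n \<inter> Dyad L j = Rg (2^n) (int j * 2^k) ((int j + 1) * 2^k) (sg n)"
  proof -
    have c: "x*(2^L*2^k) < 2^k + real j*2^k \<longleftrightarrow> x*2^L < 1 + real j" for x :: real
    proof -
      have "x*(2^L*2^k) = (x*2^L)*2^k" "2^k + real j*2^k = (1 + real j)*2^k" by (auto simp: algebra_simps)
      then show ?thesis by simp
    qed
    show ?thesis
      unfolding Sset_def Dyad_def Rg_def n by (auto simp: power_add field_simps c)
  qed
  moreover have "emeasure lborel (Rg (2^n) (int j * 2^k) ((int j + 1) * 2^k) (sg n)) =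
      ennreal (of_int ((int j + 1) * 2^k - int j * 2^k) * sg n / 2^n)"
    by (rule Rg_emeasure) (auto simp: sg_pos less_imp_le sg_le1)
  moreover have "of_int ((int j + 1) * 2^k - int j * 2^k) * sg n / 2^n = sg n / 2^L"
    unfolding n by (simp add: power_add algebra_simps)
  ultimately show ?thesis by simp
qed

lemma Sset_01:
  "emeasure lborel (Sset n \<inter> {0..1}) \<le> ennreal (2 * sg n)"
proof -
  have "Sset n \<inter> {0..1} \<subseteq> Rg (2^n) 0 (2 * 2^n) (sg n)"
    unfolding Sset_def Rg_def by auto
  then have "emeasure lborel (Sset n \<inter> {0..1}) \<le> emeasure lborel (Rg (2^n) 0 (2 * 2^n) (sg n))"
    by (intro emeasure_mono) (auto simp: Rg_sets[simplified])
  also have "\<dots> = ennreal (of_int (2 * 2^n - 0) * sg n / 2^n)"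
    by (rule Rg_emeasure) (auto simp: sg_pos less_imp_le sg_le1)
  also have "of_int (2 * 2^n - 0) * sg n / 2^n = 2 * sg n" by simp
  finally show ?thesis .
qed

lemma Tset_Dyad_pos:
  assumes "L \<le> n"
  shows "emeasure lborel (Tset n \<inter> Dyad L j) \<noteq> 0"
proof
  assume z: "emeasure lborel (Tset n \<inter> Dyad L j) = 0"
  let ?D = "Dyad L j"
  have sub: "Sset n \<inter> ?D \<subseteq> (Tset n \<inter> ?D) \<union> (\<Union>m. Sset (m + Suc n) \<inter> ?D)"
    unfolding Tset_def by auto
  have "emeasure lborel (Sset n \<inter> ?D) \<le> emeasure lborel ((Tset n \<inter> ?D) \<union> (\<Union>m. Sset (m + Suc n) \<inter> ?D))"
    using sub by (intro emeasure_mono) auto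
  also have "\<dots> \<le> emeasure lborel (Tset n \<inter> ?D) + emeasure lborel (\<Union>m. Sset (m + Suc n) \<inter> ?D)"
    by (intro emeasure_subadditive) auto
  also have "emeasure lborel (\<Union>m. Sset (m + Suc n) \<inter> ?D) \<le> (\<Sum>m. emeasure lborel (Sset (m + Suc n) \<inter> ?D))"
    by (intro emeasure_subadditive_countably) auto
  also have "(\<Sum>m. emeasure lborel (Sset (m + Suc n) \<inter> ?D)) = (\<Sum>m. ennreal (sg n / (3 * 2^L) * (1/3)^m))"
    using assms by (intro suminf_cong) (simp add: Sset_Dyad sg_def power_add field_simps)
  also have "\<dots> = ennreal (\<Sum>m. sg n / (3 * 2^L) * (1/3)^m)"
    by (intro suminf_ennreal2) (auto simp: sg_pos less_imp_le summable_geometric)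
  also have "(\<Sum>m. sg n / (3 * 2^L) * (1/3::real)^m) = sg n / (2 * 2^L)"
    by (subst suminf_mult) (auto simp: summable_geometric suminf_geometric)
  finally have "ennreal (sg n / 2^L) \<le> ennreal (sg n / (2 * 2^L))"
    using z assms by (simp add: Sset_Dyad)
  then show False using sg_pos[of n]
    by (simp add: ennreal_le_iff divide_le_cancel field_simps)
qed



lemma Tset_disj_lt: assumes "m < n" shows "Tset m \<inter> Tset n = {}"
proof -
  have n: "n = (n - Suc m) + Suc m" using assms by simp
  have "x \<notin> Tset m" if "x \<in> Tset n" for x
  proof -
    have "x \<in> Sset ((n - Suc m) + Suc m)" using that n unfolding Tset_def by simp
    then have "x \<in> (\<Union>k. Sset (k + Suc m))" by blast
    then show ?thesis unfolding Tset_def by simp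
  qed
  then show ?thesis by blast
qed

lemma Tset_disj: "m \<noteq> n \<Longrightarrow> Tset m \<inter> Tset n = {}"
  using Tset_disj_lt[of m n] Tset_disj_lt[of n m] by (metis inf_commute linorder_neqE_nat)

definition EE :: "real \<Rightarrow> real" where "EE x = (\<Sum>n. 2^n * indicator (Tset n) x)"

lemma EE_T: assumes "x \<in> Tset n" shows "EE x = 2^n"
proof -
  have eq: "(\<lambda>m. 2^m * indicator (Tset m) x :: real) = (\<lambda>m. if m = n then 2^m else 0)"
  proof
    fix m show "2^m * indicator (Tset m) x = (if m = n then 2^m else (0::real))"
    proof (cases "m = n")
      case False
      then have "x \<notin> Tset m" using assms Tset_disj[of m n] by blast
      then show ?thesis using False by simp
    qed (use assms in simp)
  qed
  show ?thesis unfolding EE_def eq by (rule sums_unique[OF sums_single, symmetric])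
qed

lemma EE_notT: assumes "x \<notin> (\<Union>n. Tset n)" shows "EE x = 0"
proof -
  have "\<And>n. x \<notin> Tset n" using assms by blast
  then show ?thesis unfolding EE_def by simp
qed

lemma EE_nonneg: "0 \<le> EE x"
  by (cases "x \<in> (\<Union>n. Tset n)") (auto simp: EE_notT EE_T)

lemma EE_meas[measurable]: "EE \<in> borel_measurable lborel"
  unfolding EE_def by measurable

lemma Tset_sub: "Tset n \<subseteq> Sset n"
  unfolding Tset_def by (rule Diff_subset)

lemma EE_integrable: "set_integrable lborel {0..1} EE"
proof -
  have eq: "(\<lambda>x. indicator {0..1} x *\<^sub>R EE x) = (\<lambda>x. \<Sum>n. indicator (Tset n \<inter> {0..1}) x * 2^n)"
  proof
    fix x
    show "indicator {0..1} x *\<^sub>R EE x = (\<Sum>n. indicator (Tset n \<inter> {0..1}) x * (2::real)^n)"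
    proof (cases "x \<in> {0..1}")
      case True
      then have "\<And>n. indicator (Tset n \<inter> {0..1}) x = (indicator (Tset n) x :: real)"
        by (simp add: indicator_def)
      then show ?thesis using True unfolding EE_def by (simp add: mult.commute)
    next
      case False
      then have "\<And>n. indicator (Tset n \<inter> {0..1}) x = (0::real)" by (simp add: indicator_def)
      then show ?thesis using False by simp
    qed
  qed
  have fin: "emeasure lborel (Tset n \<inter> {0..1}) < \<infinity>" for n
    by (rule le_less_trans[OF emeasure_mono[of _ "{0..1::real}"]]) auto
  have intn: "integrable lborel (\<lambda>x. indicator (Tset n \<inter> {0..1}) x * (2::real)^n)" for n
    using fin[of n] by (intro integrable_mult_left integrable_real_indicator) auto
  have bnd: "measure lborel (Tset n \<inter> {0..1}) \<le> 2 * sg n" for n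
  proof -
    have "emeasure lborel (Tset n \<inter> {0..1}) \<le> emeasure lborel (Sset n \<inter> {0..1})"
      by (rule emeasure_mono) (use Tset_sub in auto)
    also have "\<dots> \<le> ennreal (2 * sg n)" by (rule Sset_01)
    finally show ?thesis
      using sg_pos[of n] by (simp add: measure_def enn2real_leI)
  qed
  have "summable (\<lambda>n. \<integral>x. norm (indicator (Tset n \<inter> {0..1}) x * (2::real)^n) \<partial>lborel)"
  proof (rule summable_comparison_test'[of "\<lambda>n. 2 * (2/3::real)^n"])
    show "summable (\<lambda>n. 2 * (2/3::real)^n)" by (intro summable_mult summable_geometric) auto
    fix n
    have "(\<integral>x. norm (indicator (Tset n \<inter> {0..1}) x * (2::real)^n) \<partial>lborel)
        = measure lborel (Tset n \<inter> {0..1}) * 2^n"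
      using fin[of n] by (simp add: abs_mult)
    also have "\<dots> \<le> 2 * sg n * 2^n" using bnd[of n] by (intro mult_right_mono) auto
    also have "\<dots> = 2 * (2/3)^n" unfolding sg_def by (simp add: power_divide field_simps)
    finally show "norm (\<integral>x. norm (indicator (Tset n \<inter> {0..1}) x * (2::real)^n) \<partial>lborel) \<le> 2 * (2/3)^n"
      by simp
  qed
  moreover have "AE x in lborel. summable (\<lambda>n. norm (indicator (Tset n \<inter> {0..1}) x * (2::real)^n))"
  proof (rule AE_I2)
    fix x
    show "summable (\<lambda>n. norm (indicator (Tset n \<inter> {0..1}) x * (2::real)^n))"
    proof (cases "\<exists>m. x \<in> Tset m")
      case True
      then obtain m where m: "x \<in> Tset m" by blast
      have "(\<lambda>n. norm (indicator (Tset n \<inter> {0..1}) x * (2::real)^n)) = (\<lambda>n. if n = m then norm (indicator (Tset n \<inter> {0..1}) x * (2::real)^n) else 0)"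
      proof
        fix n show "norm (indicator (Tset n \<inter> {0..1}) x * (2::real)^n) = (if n = m then norm (indicator (Tset n \<inter> {0..1}) x * (2::real)^n) else 0)"
        proof (cases "n = m")
          case False
          then have "x \<notin> Tset n" using m Tset_disj[of n m] by blast
          then show ?thesis using False by simp
        qed simp
      qed
      then show ?thesis by (simp only:) (rule summable_single)
    next
      case False
      then show ?thesis by (simp add: indicator_def)
    qed
  qed
  ultimately have "integrable lborel (\<lambda>x. \<Sum>n. indicator (Tset n \<inter> {0..1}) x * (2::real)^n)"
    by (intro integrable_suminf intn) auto
  then show ?thesis unfolding set_integrable_def eq .
qed



lemma retag_division:
  fixes Dv :: "real set set"
  assumes Dv: "Dv division_of {a..b}" and t: "\<And>K. K \<in> Dv \<Longrightarrow> t K \<in> K"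
  shows "((\<lambda>K. (t K, K)) ` Dv) tagged_division_of {a..b}"
proof (rule tagged_division_ofI)
  show "finite ((\<lambda>K. (t K, K)) ` Dv)" using division_ofD(1)[OF Dv] by simp
  show "x \<in> K" if "(x, K) \<in> (\<lambda>K. (t K, K)) ` Dv" for x K using that t by auto
  show "K \<subseteq> {a..b}" if "(x, K) \<in> (\<lambda>K. (t K, K)) ` Dv" for x K using that division_ofD(2)[OF Dv] by auto
  show "\<exists>a b. K = cbox a b" if "(x, K) \<in> (\<lambda>K. (t K, K)) ` Dv" for x K using that division_ofD(4)[OF Dv] by auto
  show "interior K1 \<inter> interior K2 = {}"
    if "(x1, K1) \<in> (\<lambda>K. (t K, K)) ` Dv" "(x2, K2) \<in> (\<lambda>K. (t K, K)) ` Dv" "(x1, K1) \<noteq> (x2, K2)" for x1 K1 x2 K2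
  proof -
    have "K1 \<in> Dv" "K2 \<in> Dv" "x1 = t K1" "x2 = t K2" using that(1,2) by auto
    then have "K1 \<noteq> K2" using that(3) by auto
    then show ?thesis using division_ofD(5)[OF Dv] \<open>K1 \<in> Dv\<close> \<open>K2 \<in> Dv\<close> by blast
  qed
  show "\<Union>{K. \<exists>x. (x, K) \<in> (\<lambda>K. (t K, K)) ` Dv} = {a..b}"
  proof -
    have "{K. \<exists>x. (x, K) \<in> (\<lambda>K. (t K, K)) ` Dv} = Dv" by auto
    then show ?thesis using division_ofD(6)[OF Dv] by simp
  qed
qed

lemma riemann_bounded:
  assumes R: "riemann_integrable_on g a b"
  shows "\<exists>B N. N \<in> null_sets lborel \<and> (\<forall>y\<in>{a..b} - N. \<bar>g y\<bar> \<le> B)"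
proof -
  obtain I where I: "\<forall>e>0. \<exists>\<delta>>0. \<forall>D. D tagged_division_of {a..b} \<and> (\<lambda>x. ball x \<delta>) fine D \<longrightarrow>
        \<bar>(\<Sum>(x,K)\<in>D. Henstock_Kurzweil_Integration.content K * g x) - I\<bar> < e"
    using R unfolding riemann_integrable_on_def by blast
  obtain \<delta> where \<delta>: "\<delta> > 0" and P: "\<And>D. D tagged_division_of {a..b} \<Longrightarrow> (\<lambda>x. ball x \<delta>) fine D \<Longrightarrow>
        \<bar>(\<Sum>(x,K)\<in>D. Henstock_Kurzweil_Integration.content K * g x) - I\<bar> < 1"
    using I[rule_format, of 1] by auto
  obtain D0 where D0: "D0 tagged_division_of {a..b}" "(\<lambda>x. ball x (\<delta>/2)) fine D0"
  proof -
    have "gauge (\<lambda>x. ball x (\<delta>/2))" using \<delta> by (intro gauge_ball) simp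
    then show thesis using fine_division_exists_real that by blast
  qed
  define Dv where "Dv = snd ` D0"
  have Dv: "Dv division_of {a..b}" unfolding Dv_def by (rule division_of_tagged_division[OF D0(1)])
  have small: "\<And>K. K \<in> Dv \<Longrightarrow> \<exists>x0. K \<subseteq> ball x0 (\<delta>/2)"
    using D0(2) unfolding Dv_def fine_def by fastforce
  have sumt: "\<bar>(\<Sum>K\<in>Dv. Henstock_Kurzweil_Integration.content K * g (t K)) - I\<bar> < 1" if t: "\<And>K. K \<in> Dv \<Longrightarrow> t K \<in> K" for t
  proof -
    have td: "((\<lambda>K. (t K, K)) ` Dv) tagged_division_of {a..b}" by (rule retag_division[OF Dv t])
    have fn: "(\<lambda>x. ball x \<delta>) fine ((\<lambda>K. (t K, K)) ` Dv)"
    proof (rule fineI)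
      fix x K assume "(x, K) \<in> (\<lambda>K. (t K, K)) ` Dv"
      then have K: "K \<in> Dv" and x: "x = t K" by auto
      obtain x0 where x0: "K \<subseteq> ball x0 (\<delta>/2)" using small[OF K] by blast
      have "t K \<in> ball x0 (\<delta>/2)" using t[OF K] x0 by blast
      show "K \<subseteq> ball x \<delta>"
      proof
        fix z assume "z \<in> K"
        then have "z \<in> ball x0 (\<delta>/2)" using x0 by blast
        then show "z \<in> ball x \<delta>" using \<open>t K \<in> ball x0 (\<delta>/2)\<close> x
          by (auto simp: dist_real_def abs_if split: if_splits)
      qed
    qed
    have "(\<Sum>(x,K)\<in>(\<lambda>K. (t K, K)) ` Dv. Henstock_Kurzweil_Integration.content K * g x) = (\<Sum>K\<in>Dv. Henstock_Kurzweil_Integration.content K * g (t K))"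
      by (subst sum.reindex) (auto simp: inj_on_def)
    then show ?thesis using P[OF td fn] by simp
  qed
  define t0 where "t0 K = (SOME x. x \<in> K)" for K :: "real set"
  have t0: "t0 K \<in> K" if "K \<in> Dv" for K
    using division_ofD(3)[OF Dv that] unfolding t0_def by (metis some_in_eq)
  have key: "\<bar>g y\<bar> \<le> \<bar>g (t0 K)\<bar> + 2 / Henstock_Kurzweil_Integration.content K" if K: "K \<in> Dv" "y \<in> K" "Henstock_Kurzweil_Integration.content K > 0" for K y
  proof -
    define t where "t = t0(K := y)"
    have tt: "\<And>L. L \<in> Dv \<Longrightarrow> t L \<in> L" using t0 K unfolding t_def by auto
    have fin: "finite Dv" using division_ofD(1)[OF Dv] .
    have s1: "(\<Sum>L\<in>Dv. Henstock_Kurzweil_Integration.content L * g (t L)) = Henstock_Kurzweil_Integration.content K * g y + (\<Sum>L\<in>Dv - {K}. Henstock_Kurzweil_Integration.content L * g (t0 L))"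
      using fin K(1) unfolding t_def by (simp add: sum.remove)
    have s2: "(\<Sum>L\<in>Dv. Henstock_Kurzweil_Integration.content L * g (t0 L)) = Henstock_Kurzweil_Integration.content K * g (t0 K) + (\<Sum>L\<in>Dv - {K}. Henstock_Kurzweil_Integration.content L * g (t0 L))"
      using fin K(1) by (simp add: sum.remove)
    have "\<bar>Henstock_Kurzweil_Integration.content K * g y - Henstock_Kurzweil_Integration.content K * g (t0 K)\<bar> < 2"
      using sumt[OF tt] sumt[OF t0] s1 s2 by linarith
    then have "Henstock_Kurzweil_Integration.content K * \<bar>g y - g (t0 K)\<bar> < 2" using K(3) by (simp add: abs_mult right_diff_distrib[symmetric])
    then have "\<bar>g y - g (t0 K)\<bar> < 2 / Henstock_Kurzweil_Integration.content K" using K(3) by (simp add: field_simps)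
    then show ?thesis by linarith
  qed
  define B where "B = (\<Sum>K\<in>Dv. \<bar>g (t0 K)\<bar> + 2 / Henstock_Kurzweil_Integration.content K)"
  define N where "N = \<Union>{K\<in>Dv. Henstock_Kurzweil_Integration.content K = 0}"
  have "N \<in> null_sets lborel"
    unfolding N_def
  proof (rule null_sets.finite_Union)
    show "finite {K \<in> Dv. Henstock_Kurzweil_Integration.content K = 0}" using division_ofD(1)[OF Dv] by simp
    show "{K \<in> Dv. Henstock_Kurzweil_Integration.content K = 0} \<subseteq> null_sets lborel"
    proof
      fix K assume "K \<in> {K \<in> Dv. Henstock_Kurzweil_Integration.content K = 0}"
      then have K: "K \<in> Dv" "Henstock_Kurzweil_Integration.content K = 0" by auto
      then obtain u v where "K = cbox u v" using division_ofD(4)[OF Dv] by blast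
      then show "K \<in> null_sets lborel" using K(2)
        by (simp add: null_sets_def emeasure_eq_measure2 del: box_real)
    qed
  qed
  moreover have "\<forall>y\<in>{a..b} - N. \<bar>g y\<bar> \<le> B"
  proof
    fix y assume y: "y \<in> {a..b} - N"
    then obtain K where K: "K \<in> Dv" "y \<in> K" using division_ofD(6)[OF Dv] by blast
    have cK: "Henstock_Kurzweil_Integration.content K > 0" using K y unfolding N_def by (auto simp: less_le)
    have "\<bar>g y\<bar> \<le> \<bar>g (t0 K)\<bar> + 2 / Henstock_Kurzweil_Integration.content K" by (rule key[OF K cK])
    also have "\<dots> \<le> B" unfolding B_def
      by (rule member_le_sum[OF K(1)]) (use division_ofD(1)[OF Dv] in auto)
    finally show "\<bar>g y\<bar> \<le> B" .
  qed
  ultimately show ?thesis by blast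
qed



lemma dyad_in:
  assumes "0 \<le> a" "a < b"
  shows "\<exists>L j. Dyad L j \<subseteq> {a..b}"
proof -
  obtain L where L: "2 / (b - a) < (2::real)^L"
    using real_arch_pow[of 2 "2 / (b - a)"] by auto
  have pL: "(0::real) < 2^L" by simp
  have L2: "2 / 2^L < b - a" using L assms pL by (simp add: field_simps)
  define j where "j = nat (ceiling (a * 2^L))"
  have "0 \<le> a * 2^L" using assms by simp
  then have nn: "0 \<le> \<lceil>a * 2^L\<rceil>" by linarith
  have rj: "real j = of_int \<lceil>a * 2^L\<rceil>" unfolding j_def using nn by simp
  have j1: "a * 2^L \<le> real j" unfolding rj by simp
  have j2: "real j < a * 2^L + 1" unfolding rj using ceiling_correct[of "a * 2^L"] by linarith
  have "Dyad L j \<subseteq> {a..b}"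
  proof
    fix x assume "x \<in> Dyad L j"
    then have x: "real j / 2^L \<le> x" "x < (real j + 1) / 2^L" unfolding Dyad_def by auto
    have "a \<le> real j / 2^L" using j1 pL by (simp add: field_simps)
    moreover have "(real j + 1) / 2^L \<le> a + 2 / 2^L"
    proof -
      have "real j + 1 \<le> a*2^L + 2" using j2 by linarith
      then have "(real j + 1) / 2^L \<le> (a*2^L + 2) / 2^L" by (rule divide_right_mono) simp
      also have "(a*2^L + 2) / 2^L = a + 2 / 2^L" using pL by (simp add: field_simps)
      finally show ?thesis .
    qed
    ultimately show "x \<in> {a..b}" using x L2 by auto
  qed
  then show ?thesis by blast
qed

definition kap :: "nat \<Rightarrow> nat" where "kap n = fst (prod_decode n)"
definition Aset :: "nat \<Rightarrow> real set" where "Aset k = (\<Union>n\<in>{n. kap n = k}. Tset n)"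

lemma Aset_sets[measurable]: "Aset k \<in> sets lborel"
  unfolding Aset_def by measurable

lemma Aset_disj: "x \<in> Aset k \<Longrightarrow> x \<in> Aset l \<Longrightarrow> k = l"
proof -
  assume "x \<in> Aset k" "x \<in> Aset l"
  then obtain n1 n2 where "kap n1 = k" "x \<in> Tset n1" "kap n2 = l" "x \<in> Tset n2" unfolding Aset_def by auto
  then show ?thesis using Tset_disj[of n1 n2] by (cases "n1 = n2") auto
qed

lemma T_in_A: "x \<in> Tset n \<Longrightarrow> x \<in> Aset (kap n)"
  unfolding Aset_def by blast

lemma EE_ge1: "x \<in> Aset k \<Longrightarrow> 1 \<le> EE x"
proof -
  assume "x \<in> Aset k"
  then obtain n where "x \<in> Tset n" unfolding Aset_def by auto
  then show ?thesis using EE_T[of x n] by simp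
qed

lemma kap_enc: "kap (prod_encode (k, m)) = k" "m \<le> prod_encode (k, m)"
  unfolding kap_def by (auto simp: le_prod_encode_2)

lemma find_T:
  fixes M :: real
  assumes "0 \<le> a" "a < b"
  shows "\<exists>n. kap n = k \<and> M < 2^n \<and> emeasure lborel (Tset n \<inter> {a..b}) \<noteq> 0"
proof -
  obtain L j where D: "Dyad L j \<subseteq> {a..b}" using dyad_in[OF assms] by blast
  obtain m where m: "M < (2::real)^m" using real_arch_pow[of 2 M] by auto
  define n where "n = prod_encode (k, max L m)"
  have kn: "kap n = k" and mn: "max L m \<le> n" unfolding n_def using kap_enc by auto
  have "(2::real)^m \<le> 2^n" using mn by (intro power_increasing) auto
  then have "M < 2^n" using m by linarith
  moreover have "emeasure lborel (Tset n \<inter> {a..b}) \<noteq> 0"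
  proof
    assume "emeasure lborel (Tset n \<inter> {a..b}) = 0"
    moreover have "emeasure lborel (Tset n \<inter> Dyad L j) \<le> emeasure lborel (Tset n \<inter> {a..b})"
      using D by (intro emeasure_mono) auto
    ultimately show False using Tset_Dyad_pos[of L n j] mn by simp
  qed
  ultimately show ?thesis using kn by blast
qed



definition VV :: "(real \<Rightarrow> real) set" where
  "VV = {f \<in> L1_01. (AE x in lborel. x \<in> {0..1} \<longrightarrow> (\<forall>n. x \<notin> Tset n) \<longrightarrow> f x = 0) \<and>
     (\<forall>k. \<exists>c. AE x in lborel. x \<in> {0..1} \<longrightarrow> x \<in> Aset k \<longrightarrow> f x = c * EE x)}"

lemma VV_sat:
  assumes f: "f \<in> VV" and g: "g \<in> L1_01" and e: "ae_eq_on {0..1} f g"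
  shows "g \<in> VV"
proof -
  have e': "AE x in lborel. x \<in> {0..1} \<longrightarrow> f x = g x" using e unfolding ae_eq_on_def .
  have z: "AE x in lborel. x \<in> {0..1} \<longrightarrow> (\<forall>n. x \<notin> Tset n) \<longrightarrow> f x = 0" using f unfolding VV_def by blast
  have "AE x in lborel. x \<in> {0..1} \<longrightarrow> (\<forall>n. x \<notin> Tset n) \<longrightarrow> g x = 0"
    using z e' by eventually_elim auto
  moreover have "\<exists>c. AE x in lborel. x \<in> {0..1} \<longrightarrow> x \<in> Aset k \<longrightarrow> g x = c * EE x" for k
  proof -
    obtain c where c: "AE x in lborel. x \<in> {0..1} \<longrightarrow> x \<in> Aset k \<longrightarrow> f x = c * EE x"
      using f unfolding VV_def by blast
    have "AE x in lborel. x \<in> {0..1} \<longrightarrow> x \<in> Aset k \<longrightarrow> g x = c * EE x"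
      using c e' by eventually_elim auto
    then show ?thesis by blast
  qed
  ultimately show ?thesis using g unfolding VV_def by blast
qed

lemma VV_zero: "(\<lambda>x. 0) \<in> VV"
  unfolding VV_def L1_01_def by (auto intro!: exI[of _ 0] simp: set_integrable_def)

lemma VV_add:
  assumes f: "f \<in> VV" and g: "g \<in> VV"
  shows "(\<lambda>x. f x + g x) \<in> VV"
proof -
  have "(\<lambda>x. f x + g x) \<in> L1_01" using f g unfolding VV_def L1_01_def by auto
  moreover have "AE x in lborel. x \<in> {0..1} \<longrightarrow> (\<forall>n. x \<notin> Tset n) \<longrightarrow> f x + g x = 0"
  proof -
    have "AE x in lborel. x \<in> {0..1} \<longrightarrow> (\<forall>n. x \<notin> Tset n) \<longrightarrow> f x = 0"
         "AE x in lborel. x \<in> {0..1} \<longrightarrow> (\<forall>n. x \<notin> Tset n) \<longrightarrow> g x = 0"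
      using f g unfolding VV_def by blast+
    then show ?thesis by eventually_elim auto
  qed
  moreover have "\<exists>c. AE x in lborel. x \<in> {0..1} \<longrightarrow> x \<in> Aset k \<longrightarrow> f x + g x = c * EE x" for k
  proof -
    obtain c1 where c1: "AE x in lborel. x \<in> {0..1} \<longrightarrow> x \<in> Aset k \<longrightarrow> f x = c1 * EE x"
      using f unfolding VV_def by blast
    obtain c2 where c2: "AE x in lborel. x \<in> {0..1} \<longrightarrow> x \<in> Aset k \<longrightarrow> g x = c2 * EE x"
      using g unfolding VV_def by blast
    have "AE x in lborel. x \<in> {0..1} \<longrightarrow> x \<in> Aset k \<longrightarrow> f x + g x = (c1 + c2) * EE x"
      using c1 c2 by eventually_elim (auto simp: algebra_simps)
    then show ?thesis by blast
  qed
  ultimately show ?thesis unfolding VV_def by blast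
qed

lemma VV_scale:
  assumes f: "f \<in> VV"
  shows "(\<lambda>x. a * f x) \<in> VV"
proof -
  have "(\<lambda>x. a * f x) \<in> L1_01" using f unfolding VV_def L1_01_def by auto
  moreover have "AE x in lborel. x \<in> {0..1} \<longrightarrow> (\<forall>n. x \<notin> Tset n) \<longrightarrow> a * f x = 0"
  proof -
    have "AE x in lborel. x \<in> {0..1} \<longrightarrow> (\<forall>n. x \<notin> Tset n) \<longrightarrow> f x = 0"
      using f unfolding VV_def by blast
    then show ?thesis by eventually_elim auto
  qed
  moreover have "\<exists>c. AE x in lborel. x \<in> {0..1} \<longrightarrow> x \<in> Aset k \<longrightarrow> a * f x = c * EE x" for k
  proof -
    obtain c1 where c1: "AE x in lborel. x \<in> {0..1} \<longrightarrow> x \<in> Aset k \<longrightarrow> f x = c1 * EE x"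
      using f unfolding VV_def by blast
    have "AE x in lborel. x \<in> {0..1} \<longrightarrow> x \<in> Aset k \<longrightarrow> a * f x = (a * c1) * EE x"
      using c1 by eventually_elim (auto simp: algebra_simps)
    then show ?thesis by blast
  qed
  ultimately show ?thesis unfolding VV_def by blast
qed

definition Ek :: "nat \<Rightarrow> real \<Rightarrow> real" where "Ek i x = indicator (Aset i) x * EE x"

lemma Ek_VV: "Ek i \<in> VV"
proof -
  have "set_integrable lborel {0..1} (Ek i)"
  proof -
    have "integrable lborel (\<lambda>x. indicator (Aset i) x *\<^sub>R (indicator {0..1} x *\<^sub>R EE x))"
      by (rule integrable_mult_indicator[OF _ EE_integrable[unfolded set_integrable_def]]) (use Aset_sets in simp)
    moreover have "(\<lambda>x. indicator (Aset i) x *\<^sub>R (indicator {0..1} x *\<^sub>R EE x)) = (\<lambda>x. indicator {0..1} x *\<^sub>R Ek i x)"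
      unfolding Ek_def by (auto simp: fun_eq_iff)
    ultimately show ?thesis unfolding set_integrable_def by simp
  qed
  moreover have "AE x in lborel. x \<in> {0..1} \<longrightarrow> (\<forall>n. x \<notin> Tset n) \<longrightarrow> Ek i x = 0"
  proof (rule AE_I2, intro impI)
    fix x assume "\<forall>n. x \<notin> Tset n"
    then have "x \<notin> Aset i" unfolding Aset_def by blast
    then show "Ek i x = 0" unfolding Ek_def by simp
  qed
  moreover have "\<exists>c. AE x in lborel. x \<in> {0..1} \<longrightarrow> x \<in> Aset k \<longrightarrow> Ek i x = c * EE x" for k
  proof (cases "k = i")
    case True
    then show ?thesis unfolding Ek_def by (intro exI[of _ 1]) auto
  next
    case False
    have "AE x in lborel. x \<in> {0..1} \<longrightarrow> x \<in> Aset k \<longrightarrow> Ek i x = 0 * EE x"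
    proof (rule AE_I2, intro impI)
      fix x assume "x \<in> Aset k"
      then have "x \<notin> Aset i" using Aset_disj False by blast
      then show "Ek i x = 0 * EE x" unfolding Ek_def by simp
    qed
    then show ?thesis by blast
  qed
  ultimately show ?thesis unfolding VV_def L1_01_def by blast
qed

lemma Aset_pos: "\<not> (AE x in lborel. x \<in> {0..1} \<longrightarrow> x \<notin> Aset k)"
proof
  assume A: "AE x in lborel. x \<in> {0..1} \<longrightarrow> x \<notin> Aset k"
  obtain n where n: "kap n = k" "emeasure lborel (Tset n \<inter> {0..1}) \<noteq> 0"
    using find_T[of 0 1 k 0] by auto
  have "AE x in lborel. x \<notin> Tset n \<inter> {0..1}"
    using A by eventually_elim (use n(1) T_in_A in auto)
  then have "emeasure lborel (Tset n \<inter> {0..1}) = 0"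
    by (subst (asm) AE_iff_measurable[of "Tset n \<inter> {0..1}"]) auto
  then show False using n(2) by simp
qed

lemma Ek_indep:
  assumes "ae_eq_on {0..1} (\<lambda>x. \<Sum>i<n. c i * Ek i x) (\<lambda>x. 0)" and "j < n"
  shows "c j = 0"
proof (rule ccontr)
  assume cj: "c j \<noteq> 0"
  have A: "AE x in lborel. x \<in> {0..1} \<longrightarrow> (\<Sum>i<n. c i * Ek i x) = 0"
    using assms(1) unfolding ae_eq_on_def .
  have "AE x in lborel. x \<in> {0..1} \<longrightarrow> x \<notin> Aset j"
    using A
  proof eventually_elim
    case (elim x)
    show ?case
    proof (intro impI notI)
      assume x01: "x \<in> {0..1}" and xA: "x \<in> Aset j"
      have "(\<Sum>i<n. c i * Ek i x) = (\<Sum>i<n. if i = j then c j * EE x else 0)"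
      proof (rule sum.cong)
        fix i assume "i \<in> {..<n}"
        show "c i * Ek i x = (if i = j then c j * EE x else 0)"
        proof (cases "i = j")
          case False
          then have "x \<notin> Aset i" using xA Aset_disj by blast
          then show ?thesis using False unfolding Ek_def by simp
        qed (use xA in \<open>simp add: Ek_def\<close>)
      qed simp
      also have "\<dots> = c j * EE x" using assms(2) by simp
      finally have "c j * EE x = 0" using elim x01 by simp
      moreover have "EE x \<ge> 1" using EE_ge1[OF xA] .
      ultimately show False using cj by simp
    qed
  qed
  then show False using Aset_pos by blast
qed

lemma VV_nowhere:
  assumes f: "f \<in> VV" and nz: "\<not> ae_eq_on {0..1} f (\<lambda>x. 0)"
  shows "f \<in> nowhere_Riemann_L1"
proof -
  have "\<forall>k. \<exists>c. AE x in lborel. x \<in> {0..1} \<longrightarrow> x \<in> Aset k \<longrightarrow> f x = c * EE x"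
    using f unfolding VV_def by blast
  then obtain cc where cc: "\<And>k. AE x in lborel. x \<in> {0..1} \<longrightarrow> x \<in> Aset k \<longrightarrow> f x = cc k * EE x"
    by (subst (asm) choice_iff) blast
  have z: "AE x in lborel. x \<in> {0..1} \<longrightarrow> (\<forall>n. x \<notin> Tset n) \<longrightarrow> f x = 0" using f unfolding VV_def by blast
  obtain k where ck: "cc k \<noteq> 0"
  proof (rule ccontr)
    assume "\<not> thesis"
    then have c0: "\<And>k. cc k = 0" using that by blast
    have "AE x in lborel. \<forall>k. x \<in> {0..1} \<longrightarrow> x \<in> Aset k \<longrightarrow> f x = cc k * EE x"
      using cc by (subst AE_all_countable) blast
    then have "AE x in lborel. x \<in> {0..1} \<longrightarrow> f x = 0"
      using z
    proof eventually_elim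
      case (elim x)
      show ?case
      proof
        assume x: "x \<in> {0..1}"
        show "f x = 0"
        proof (cases "\<exists>n. x \<in> Tset n")
          case True
          then obtain n where "x \<in> Tset n" by blast
          then have "x \<in> Aset (kap n)" by (rule T_in_A)
          then show ?thesis using elim(1) x c0[of "kap n"] by auto
        next
          case False
          then show ?thesis using elim(2) x by blast
        qed
      qed
    qed
    then show False using nz unfolding ae_eq_on_def by simp
  qed
  have "\<not> (\<exists>g. riemann_integrable_on g a b \<and> ae_eq_on {a..b} f g)"
    if ab: "0 \<le> a" "a < b" "b \<le> 1" for a b
  proof
    assume "\<exists>g. riemann_integrable_on g a b \<and> ae_eq_on {a..b} f g"
    then obtain g where g: "riemann_integrable_on g a b" and fg: "AE x in lborel. x \<in> {a..b} \<longrightarrow> f x = g x"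
      unfolding ae_eq_on_def by blast
    obtain B N where N: "N \<in> null_sets lborel" and B: "\<forall>y\<in>{a..b} - N. \<bar>g y\<bar> \<le> B"
      using riemann_bounded[OF g] by blast
    obtain n where n: "kap n = k" "B / \<bar>cc k\<bar> < 2^n" "emeasure lborel (Tset n \<inter> {a..b}) \<noteq> 0"
      using find_T[OF ab(1,2), of k "B / \<bar>cc k\<bar>"] by blast
    have Bn: "B < \<bar>cc k\<bar> * 2^n" using n(2) ck by (simp add: divide_less_eq mult.commute)
    have "AE x in lborel. x \<notin> Tset n \<inter> {a..b}"
      using cc[of k] fg AE_not_in[OF N]
    proof eventually_elim
      case (elim x)
      show ?case
      proof
        assume x: "x \<in> Tset n \<inter> {a..b}"
        then have x01: "x \<in> {0..1}" using ab by auto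
        have xA: "x \<in> Aset k" using T_in_A[of x n] x n(1) by auto
        have "f x = cc k * 2^n" using elim(1) x01 xA EE_T[of x n] x by auto
        moreover have "f x = g x" using elim(2) x by auto
        moreover have "\<bar>g x\<bar> \<le> B" using B elim(3) x by auto
        ultimately have "\<bar>cc k\<bar> * 2^n \<le> B" by (simp add: abs_mult)
        then show False using Bn by simp
      qed
    qed
    then have "emeasure lborel (Tset n \<inter> {a..b}) = 0"
      by (subst (asm) AE_iff_measurable[of "Tset n \<inter> {a..b}"]) auto
    then show False using n(3) by simp
  qed
  moreover have "f \<in> L1_01" using f unfolding VV_def by blast
  ultimately show ?thesis unfolding nowhere_Riemann_L1_def by blast
qed

lemma intS:
  fixes h :: "real \<Rightarrow> real"
  assumes S: "S \<in> sets lborel" "S \<subseteq> {0..1}" and h: "set_integrable lborel {0..1} h"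
  shows "integrable lborel (\<lambda>x. indicator S x * h x)"
proof -
  have "integrable lborel (\<lambda>x. indicator S x *\<^sub>R (indicator {0..1} x *\<^sub>R h x))"
    by (rule integrable_mult_indicator) (use S h in \<open>auto simp: set_integrable_def\<close>)
  moreover have "(\<lambda>x. indicator S x *\<^sub>R (indicator {0..1} x *\<^sub>R h x)) = (\<lambda>x. indicator S x * h x)"
    using S(2) by (auto simp: fun_eq_iff indicator_def)
  ultimately show ?thesis by simp
qed

lemma L1_dist_int: "L1_dist f g = (\<integral>x. indicator {0..1} x * \<bar>f x - g x\<bar> \<partial>lborel)"
  unfolding L1_dist_def set_lebesgue_integral_def by simp

lemma closed_piece:
  assumes S: "S \<in> sets lborel" "S \<subseteq> {0..1}"
    and F: "\<And>n. F n \<in> L1_01" and g: "g \<in> L1_01"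
    and Fc: "\<And>n. \<exists>c. AE x in lborel. x \<in> S \<longrightarrow> F n x = c * EE x"
    and lim: "(\<lambda>n. L1_dist (F n) g) \<longlonglongrightarrow> 0"
  shows "\<exists>c. AE x in lborel. x \<in> S \<longrightarrow> g x = c * EE x"
proof -
  have gi: "set_integrable lborel {0..1} g" using g unfolding L1_01_def by simp
  have Fi: "set_integrable lborel {0..1} (F n)" for n using F unfolding L1_01_def by simp
  define M where "M = (\<integral>x. indicator S x * EE x \<partial>lborel)"
  define c where "c = (if M = 0 then 0 else (\<integral>x. indicator S x * g x \<partial>lborel) / M)"
  have iEE: "integrable lborel (\<lambda>x. indicator S x * EE x)" by (rule intS[OF S EE_integrable])
  have ig: "integrable lborel (\<lambda>x. indicator S x * g x)" by (rule intS[OF S gi])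
  have M0: "0 \<le> M" unfolding M_def using EE_nonneg by (intro Bochner_Integration.integral_nonneg) auto
  define Q where "Q = (\<integral>x. indicator S x * \<bar>g x - c * EE x\<bar> \<partial>lborel)"
  have iQ: "integrable lborel (\<lambda>x. indicator S x * \<bar>g x - c * EE x\<bar>)"
    by (rule intS[OF S]) (intro set_integrable_abs set_integral_diff(1) gi set_integrable_mult_right EE_integrable)
  have bound: "Q \<le> 2 * L1_dist (F n) g" for n
  proof -
    obtain cn where cn: "AE x in lborel. x \<in> S \<longrightarrow> F n x = cn * EE x" using Fc by blast
    define d where "d = L1_dist (F n) g"
    have iFg: "integrable lborel (\<lambda>x. indicator S x * \<bar>F n x - g x\<bar>)"
      by (rule intS[OF S]) (intro set_integrable_abs set_integral_diff(1) gi Fi)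
    have iFg01: "integrable lborel (\<lambda>x. indicator {0..1} x * \<bar>F n x - g x\<bar>)"
      by (rule intS) (auto intro!: set_integrable_abs set_integral_diff(1) gi Fi)
    have iGc: "integrable lborel (\<lambda>x. indicator S x * \<bar>g x - cn * EE x\<bar>)"
      by (rule intS[OF S]) (intro set_integrable_abs set_integral_diff(1) gi set_integrable_mult_right EE_integrable)
    have b1: "(\<integral>x. indicator S x * \<bar>F n x - g x\<bar> \<partial>lborel) \<le> d"
      unfolding d_def L1_dist_int
      by (rule integral_mono[OF iFg iFg01]) (use S(2) in \<open>auto simp: indicator_def\<close>)
    have e1: "(\<integral>x. indicator S x * \<bar>g x - cn * EE x\<bar> \<partial>lborel) = (\<integral>x. indicator S x * \<bar>F n x - g x\<bar> \<partial>lborel)"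
      by (rule integral_cong_AE) (use iGc iFg cn in \<open>auto elim!: AE_mp simp: indicator_def\<close>)
    have b2: "\<bar>cn - c\<bar> * M \<le> d"
    proof (cases "M = 0")
      case True
      have "0 \<le> d" unfolding d_def L1_dist_int by (intro Bochner_Integration.integral_nonneg) auto
      then show ?thesis using True by simp
    next
      case False
      have cM: "c * M = (\<integral>x. indicator S x * g x \<partial>lborel)" unfolding c_def using False by simp
      have "(cn - c) * M = (\<integral>x. indicator S x * (cn * EE x) \<partial>lborel) - (\<integral>x. indicator S x * g x \<partial>lborel)"
        using cM unfolding M_def by (simp add: algebra_simps)
      also have "\<dots> = (\<integral>x. indicator S x * (cn * EE x) - indicator S x * g x \<partial>lborel)"
        by (rule Bochner_Integration.integral_diff[symmetric]) (use ig intS[OF S set_integrable_mult_right[OF EE_integrable, of cn]] in auto)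
      also have "\<dots> = (\<integral>x. indicator S x * (F n x - g x) \<partial>lborel)"
      proof -
        have iA: "integrable lborel (\<lambda>x. indicator S x * (cn * EE x) - indicator S x * g x)"
          using ig intS[OF S set_integrable_mult_right[OF EE_integrable, of cn]] by auto
        have iB: "integrable lborel (\<lambda>x. indicator S x * (F n x - g x))"
          by (rule intS[OF S set_integral_diff(1)[OF Fi gi]])
        show ?thesis
          by (rule integral_cong_AE[OF borel_measurable_integrable[OF iA] borel_measurable_integrable[OF iB]])
             (use cn in \<open>auto elim!: AE_mp simp: indicator_def\<close>)
      qed
      finally have "\<bar>(cn - c) * M\<bar> \<le> (\<integral>x. indicator S x * \<bar>F n x - g x\<bar> \<partial>lborel)"
        using integral_abs_bound_integral[of lborel "\<lambda>x. indicator S x * (F n x - g x)" "\<lambda>x. indicator S x * \<bar>F n x - g x\<bar>"]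
          intS[OF S set_integral_diff(1)[OF Fi gi]] iFg by (simp add: abs_mult)
      then show ?thesis using b1 M0 by (simp add: abs_mult)
    qed
    have "Q \<le> (\<integral>x. indicator S x * \<bar>g x - cn * EE x\<bar> + \<bar>cn - c\<bar> * (indicator S x * EE x) \<partial>lborel)"
      unfolding Q_def
    proof (rule integral_mono[OF iQ])
      show "integrable lborel (\<lambda>x. indicator S x * \<bar>g x - cn * EE x\<bar> + \<bar>cn - c\<bar> * (indicator S x * EE x))"
        using iGc iEE by auto
      fix x
      have "\<bar>g x - c * EE x\<bar> \<le> \<bar>g x - cn * EE x\<bar> + \<bar>cn - c\<bar> * EE x"
      proof -
        have "\<bar>cn * EE x - c * EE x\<bar> = \<bar>cn - c\<bar> * EE x"
          using EE_nonneg[of x] by (simp add: left_diff_distrib[symmetric] abs_mult)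
        moreover have "\<bar>g x - c * EE x\<bar> \<le> \<bar>g x - cn * EE x\<bar> + \<bar>cn * EE x - c * EE x\<bar>"
          by arith
        ultimately show ?thesis by linarith
      qed
      then show "indicator S x * \<bar>g x - c * EE x\<bar> \<le> indicator S x * \<bar>g x - cn * EE x\<bar> + \<bar>cn - c\<bar> * (indicator S x * EE x)"
        by (auto simp: indicator_def)
    qed
    also have "\<dots> = (\<integral>x. indicator S x * \<bar>g x - cn * EE x\<bar> \<partial>lborel) + \<bar>cn - c\<bar> * M"
      unfolding M_def using iGc iEE by simp
    also have "\<dots> \<le> 2 * d" using b1 b2 e1 by simp
    finally show ?thesis unfolding d_def .
  qed
  have "Q \<le> 0"
  proof (rule LIMSEQ_le_const)
    show "(\<lambda>n. 2 * L1_dist (F n) g) \<longlonglongrightarrow> 0" using tendsto_mult_right_zero[OF lim, of 2] by simp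
    show "\<exists>N. \<forall>n\<ge>N. Q \<le> 2 * L1_dist (F n) g" using bound by blast
  qed
  moreover have "0 \<le> Q" unfolding Q_def by (intro Bochner_Integration.integral_nonneg) auto
  ultimately have "Q = 0" by simp
  then have "AE x in lborel. indicator S x * \<bar>g x - c * EE x\<bar> = 0"
    unfolding Q_def by (subst (asm) integral_nonneg_eq_0_iff_AE[OF iQ]) auto
  then have "AE x in lborel. x \<in> S \<longrightarrow> g x = c * EE x"
    by eventually_elim (auto simp: indicator_def)
  then show ?thesis by blast
qed

lemma VV_closed:
  assumes F: "\<And>n. F n \<in> VV" and g: "g \<in> L1_01" and lim: "(\<lambda>n. L1_dist (F n) g) \<longlonglongrightarrow> 0"
  shows "g \<in> VV"
proof -
  have FL: "\<And>n. F n \<in> L1_01" using F unfolding VV_def by blast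
  let ?S0 = "{0..1} - (\<Union>n. Tset n)"
  have "\<exists>c. AE x in lborel. x \<in> ?S0 \<longrightarrow> g x = c * EE x"
  proof (rule closed_piece[OF _ _ FL g _ lim])
    show "?S0 \<in> sets lborel" by measurable
    show "?S0 \<subseteq> {0..1}" by blast
    fix n
    have "AE x in lborel. x \<in> {0..1} \<longrightarrow> (\<forall>n. x \<notin> Tset n) \<longrightarrow> F n x = 0" using F[of n] unfolding VV_def by blast
    then have "AE x in lborel. x \<in> ?S0 \<longrightarrow> F n x = 0 * EE x" by eventually_elim auto
    then show "\<exists>c. AE x in lborel. x \<in> ?S0 \<longrightarrow> F n x = c * EE x" by blast
  qed
  then obtain c0 where c0: "AE x in lborel. x \<in> ?S0 \<longrightarrow> g x = c0 * EE x" by blast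
  have z: "AE x in lborel. x \<in> {0..1} \<longrightarrow> (\<forall>n. x \<notin> Tset n) \<longrightarrow> g x = 0"
    using c0
  proof eventually_elim
    case (elim x)
    show ?case
    proof (intro impI)
      assume "x \<in> {0..1}" "\<forall>n. x \<notin> Tset n"
      then show "g x = 0" using elim EE_notT[of x] by auto
    qed
  qed
  have "\<exists>c. AE x in lborel. x \<in> {0..1} \<longrightarrow> x \<in> Aset k \<longrightarrow> g x = c * EE x" for k
  proof -
    have "\<exists>c. AE x in lborel. x \<in> Aset k \<inter> {0..1} \<longrightarrow> g x = c * EE x"
    proof (rule closed_piece[OF _ _ FL g _ lim])
      show "Aset k \<inter> {0..1} \<in> sets lborel" by measurable
      show "Aset k \<inter> {0..1} \<subseteq> {0..1}" by blast
      fix n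
      obtain c where "AE x in lborel. x \<in> {0..1} \<longrightarrow> x \<in> Aset k \<longrightarrow> F n x = c * EE x"
        using F[of n] unfolding VV_def by blast
      then have "AE x in lborel. x \<in> Aset k \<inter> {0..1} \<longrightarrow> F n x = c * EE x" by eventually_elim auto
      then show "\<exists>c. AE x in lborel. x \<in> Aset k \<inter> {0..1} \<longrightarrow> F n x = c * EE x" by blast
    qed
    then obtain c where "AE x in lborel. x \<in> Aset k \<inter> {0..1} \<longrightarrow> g x = c * EE x" by blast
    then have "AE x in lborel. x \<in> {0..1} \<longrightarrow> x \<in> Aset k \<longrightarrow> g x = c * EE x" by eventually_elim auto
    then show ?thesis by blast
  qed
  then show ?thesis using z g unfolding VV_def by blast
qed

theorem mainTheorem2:
  shows "spaceable_L1 nowhere_Riemann_L1"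
  unfolding spaceable_L1_def
proof (intro exI conjI)
  show "closed_inf_dim_subspace_L1 VV"
    unfolding closed_inf_dim_subspace_L1_def
  proof (intro conjI ballI allI impI)
    show "VV \<subseteq> L1_01" unfolding VV_def by blast
    show "g \<in> VV" if "f \<in> VV" "g \<in> L1_01" "ae_eq_on {0..1} f g" for f g using VV_sat that by blast
    show "(\<lambda>x. 0) \<in> VV" by (rule VV_zero)
    show "(\<lambda>x. f x + g x) \<in> VV" if "f \<in> VV" "g \<in> VV" for f g using VV_add that by blast
    show "(\<lambda>x. c * f x) \<in> VV" if "f \<in> VV" for c f using VV_scale that by blast
    show "g \<in> VV" if "(\<forall>n. F n \<in> VV) \<and> g \<in> L1_01 \<and> (\<lambda>n. L1_dist (F n) g) \<longlonglongrightarrow> 0" for F g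
      using VV_closed that by blast
    show "\<exists>E::nat \<Rightarrow> real \<Rightarrow> real. (\<forall>i. E i \<in> VV) \<and>
        (\<forall>n c. ae_eq_on {0..1} (\<lambda>x. \<Sum>i<n. c i * E i x) (\<lambda>x. 0) \<longrightarrow> (\<forall>i<n. c i = 0))"
      using Ek_VV Ek_indep by blast
  qed
  show "\<forall>f\<in>VV. \<not> ae_eq_on {0..1} f (\<lambda>x. 0) \<longrightarrow> f \<in> nowhere_Riemann_L1"
    using VV_nowhere by blast
qed


end
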